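(* Let $G$ be a finite, non-empty, connected, simple undirected graph, and run the Greedy Radial Partitioning procedure described in the context on $G$. Then the procedure terminates, the sets $\mathcal V_1,\ldots,\mathcal V_m$ it returns form a partition of the vertex set of $G$, and for each $k$ the subgraph of $G$ induced by $\mathcal V_k$ is a tree.
   Context: Greedy Radial Partitioning procedure. Set $k=1$ and let $H:=G$. START: set $\mathcal V_k=\emptyset$ and let $S$ be an empty stack whose entries are pairs (node, parent). Select an arbitrary (e.g. random) node $v$ of $H$, set $\mathcal V_k\gets\{v\}$, and push every neighbor of $v$ in $H$ onto $S$ with parent $v$. While $S$ is non-empty: pop an entry $(u,p)$ from $S$; if no neighbor of $u$ in $H$ other than its parent $p$ belongs to $\mathcal V_k$, then set $\mathcal V_k\gets\mathcal V_k\cup\{u\}$ and push every neighbor of $u$ in $H$ that is not in $\mathcal V_k$ onto $S$ with parent $u$. When $S$ is empty, save $\mathcal V_k$ as a part, delete the vertices of $\mathcal V_k$ from $H$ (i.e. replace $H$ by the subgraph induced on the remaining vertices); if $H$ is non-empty, set $k\gets k+1$ and go to START; otherwise return all saved sets $\mathcal V_1,\ldots,\mathcal V_m$. A partition of the vertex set in which each part induces a tree is called a radial partitioning. *)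

theory Defs
  imports Main
begin

definition simple_graph :: "'a set \<Rightarrow> ('a \<Rightarrow> 'a \<Rightarrow> bool) \<Rightarrow> bool" where
  "simple_graph V E \<longleftrightarrow> finite V \<and> (\<forall>x y. E x y \<longrightarrow> x \<in> V \<and> y \<in> V)
     \<and> (\<forall>x y. E x y \<longrightarrow> E y x) \<and> (\<forall>x. \<not> E x x)"

definition induced_connected :: "('a \<Rightarrow> 'a \<Rightarrow> bool) \<Rightarrow> 'a set \<Rightarrow> bool" where
  "induced_connected E S \<longleftrightarrow>
     (\<forall>x\<in>S. \<forall>y\<in>S. (x, y) \<in> {(a, b). a \<in> S \<and> b \<in> S \<and> E a b}\<^sup>*)"

definition induced_cycle :: "('a \<Rightarrow> 'a \<Rightarrow> bool) \<Rightarrow> 'a set \<Rightarrow> 'a list \<Rightarrow> bool" where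
  "induced_cycle E S c \<longleftrightarrow> length c \<ge> 3 \<and> distinct c \<and> set c \<subseteq> S
     \<and> (\<forall>i. Suc i < length c \<longrightarrow> E (c ! i) (c ! Suc i))
     \<and> E (last c) (hd c)"

definition induced_tree :: "('a \<Rightarrow> 'a \<Rightarrow> bool) \<Rightarrow> 'a set \<Rightarrow> bool" where
  "induced_tree E S \<longleftrightarrow> S \<noteq> {} \<and> induced_connected E S \<and> (\<nexists>c. induced_cycle E S c)"

definition is_partition_list :: "'a set \<Rightarrow> 'a set list \<Rightarrow> bool" where
  "is_partition_list V Ps \<longleftrightarrow> (\<forall>P\<in>set Ps. P \<noteq> {})
     \<and> (\<forall>i j. i < j \<and> j < length Ps \<longrightarrow> Ps ! i \<inter> Ps ! j = {})
     \<and> \<Union>(set Ps) = V"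

text \<open>Idle H Ps: at START, with remaining graph H (vertex set) and saved parts Ps.
  Build H Ps Vk S: building the current part Vk with stack S (head = top),
  entries (node, parent).\<close>
datatype 'a grp_state =
    Idle "'a set" "'a set list"
  | Build "'a set" "'a set list" "'a set" "('a \<times> 'a) list"

text \<open>One step of the procedure (nondeterministic: the start vertex and the
  order in which neighbours are pushed are arbitrary). The current graph H is the
  subgraph of G induced on the vertex set H.\<close>
inductive grp_step :: "('a \<Rightarrow> 'a \<Rightarrow> bool) \<Rightarrow> 'a grp_state \<Rightarrow> 'a grp_state \<Rightarrow> bool"
  for E :: "'a \<Rightarrow> 'a \<Rightarrow> bool" where
  start: "\<lbrakk> v \<in> H; distinct L; set L = {(w, v) | w. w \<in> H \<and> E v w} \<rbrakk>
          \<Longrightarrow> grp_step E (Idle H Ps) (Build H Ps {v} L)"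
| pop_add: "\<lbrakk> \<forall>w\<in>H. E u w \<and> w \<noteq> p \<longrightarrow> w \<notin> Vk; distinct L;
             set L = {(w, u) | w. w \<in> H \<and> E u w \<and> w \<notin> insert u Vk} \<rbrakk>
          \<Longrightarrow> grp_step E (Build H Ps Vk ((u, p) # S)) (Build H Ps (insert u Vk) (L @ S))"
| pop_skip: "\<not> (\<forall>w\<in>H. E u w \<and> w \<noteq> p \<longrightarrow> w \<notin> Vk)
          \<Longrightarrow> grp_step E (Build H Ps Vk ((u, p) # S)) (Build H Ps Vk S)"
| finish: "grp_step E (Build H Ps Vk []) (Idle (H - Vk) (Ps @ [Vk]))"

end

theory Submission
  imports Defs
begin

lemma part_app:
  assumes "is_partition_list A Ps" "B \<noteq> {}" "A \<inter> B = {}"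
  shows "is_partition_list (A \<union> B) (Ps @ [B])"
  unfolding is_partition_list_def
proof (intro conjI allI impI)
  show "\<forall>P\<in>set (Ps @ [B]). P \<noteq> {}" using assms unfolding is_partition_list_def by auto
  show "\<Union> (set (Ps @ [B])) = A \<union> B" using assms unfolding is_partition_list_def by auto
  fix i j assume ij: "i < j \<and> j < length (Ps @ [B])"
  show "(Ps @ [B]) ! i \<inter> (Ps @ [B]) ! j = {}"
  proof (cases "j < length Ps")
    case True
    then show ?thesis using ij assms(1) unfolding is_partition_list_def by (auto simp: nth_append)
  next
    case False
    then have "j = length Ps" using ij by auto
    moreover have "Ps ! i \<in> set Ps" using ij False by auto
    then have "Ps ! i \<subseteq> A" using assms(1) unfolding is_partition_list_def by auto
    ultimately show ?thesis using ij assms(3) by (auto simp: nth_append)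
  qed
qed

lemma cyc_step:
  assumes "induced_cycle E S c" "j < length c"
  shows "E (c ! j) (c ! (if j + 1 < length c then j + 1 else 0))"
proof (cases "j + 1 < length c")
  case True then show ?thesis using assms unfolding induced_cycle_def by auto
next
  case False
  then have j: "j = length c - 1" using assms by auto
  have ne: "c \<noteq> []" using assms(2) by auto
  have "E (last c) (hd c)" using assms unfolding induced_cycle_def by auto
  then show ?thesis using False j ne by (simp add: last_conv_nth hd_conv_nth)
qed

lemma tree_insert:
  assumes sg: "simple_graph V E"
    and T: "induced_tree E S" and p: "p \<in> S" and u: "u \<notin> S" and up: "E u p"
    and only: "\<forall>w\<in>S. E u w \<longrightarrow> w = p"
  shows "induced_tree E (insert u S)"
proof -
  have sym: "\<And>x y. E x y \<Longrightarrow> E y x" and irr: "\<And>x. \<not> E x x"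
    using sg unfolding simple_graph_def by auto
  have pu: "E p u" using up sym by auto
  let ?R = "{(a, b). a \<in> S \<and> b \<in> S \<and> E a b}"
  let ?R' = "{(a, b). a \<in> insert u S \<and> b \<in> insert u S \<and> E a b}"
  have mono: "?R\<^sup>* \<subseteq> ?R'\<^sup>*" by (rule rtrancl_mono) auto
  have conS: "\<And>x y. x \<in> S \<Longrightarrow> y \<in> S \<Longrightarrow> (x, y) \<in> ?R'\<^sup>*"
    using T mono unfolding induced_tree_def induced_connected_def by blast
  have e1: "(u, p) \<in> ?R'" using up p by auto
  have e2: "(p, u) \<in> ?R'" using pu p by auto
  have con: "induced_connected E (insert u S)"
    unfolding induced_connected_def
  proof (intro ballI)
    fix x y assume x: "x \<in> insert u S" and y: "y \<in> insert u S"
    show "(x, y) \<in> ?R'\<^sup>*"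
    proof (cases "x = u")
      case True
      show ?thesis
      proof (cases "y = u")
        case True then show ?thesis using \<open>x = u\<close> by simp
      next
        case False
        then have "y \<in> S" using y by auto
        then have "(p, y) \<in> ?R'\<^sup>*" using conS p by blast
        then show ?thesis using e1 \<open>x = u\<close> by (meson converse_rtrancl_into_rtrancl)
      qed
    next
      case False
      then have xS: "x \<in> S" using x by auto
      show ?thesis
      proof (cases "y = u")
        case True
        have "(x, p) \<in> ?R'\<^sup>*" using conS p xS by blast
        then show ?thesis using e2 True by (meson rtrancl_into_rtrancl)
      next
        case False
        then show ?thesis using conS xS y by blast
      qed
    qed
  qed
  have nocyc: "\<nexists>c. induced_cycle E (insert u S) c"
  proof
    assume "\<exists>c. induced_cycle E (insert u S) c"
    then obtain c where c: "induced_cycle E (insert u S) c" by blast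
    show False
    proof (cases "u \<in> set c")
      case False
      then have "induced_cycle E S c" using c unfolding induced_cycle_def by auto
      then show False using T unfolding induced_tree_def by blast
    next
      case True
      then obtain i where i: "i < length c" "c ! i = u" by (meson in_set_conv_nth)
      define n where "n = length c"
      have n3: "n \<ge> 3" and dist: "distinct c" and sub: "set c \<subseteq> insert u S"
        using c unfolding induced_cycle_def n_def by auto
      define s where "s = (if i + 1 < n then i + 1 else 0)"
      define q where "q = (if i = 0 then n - 1 else i - 1)"
      have sn: "s < n" and qn: "q < n" using i n3 unfolding s_def q_def n_def by auto
      have qs: "(if q + 1 < length c then q + 1 else 0) = i"
        using i n3 unfolding q_def n_def by auto
      have E1: "E u (c ! s)" using cyc_step[OF c i(1)] i unfolding s_def n_def by simp
      have E2: "E (c ! q) u" using cyc_step[OF c, of q] qn qs i unfolding n_def by simp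
      then have E2': "E u (c ! q)" using sym by blast
      have cs: "c ! s \<in> insert u S" using sn sub nth_mem unfolding n_def by blast
      have cq: "c ! q \<in> insert u S" using qn sub nth_mem unfolding n_def by blast
      have "c ! s \<noteq> u" using E1 irr by auto
      then have "c ! s = p" using cs only E1 by auto
      moreover have "c ! q \<noteq> u" using E2' irr by auto
      then have "c ! q = p" using cq only E2' by auto
      ultimately have "c ! s = c ! q" by simp
      then have "s = q" using dist sn qn unfolding n_def by (simp add: nth_eq_iff_index_eq)
      then show False using i n3 unfolding s_def q_def n_def by (auto split: if_splits)
    qed
  qed
  show ?thesis using con nocyc unfolding induced_tree_def by auto
qed


fun grp_inv :: "'a set \<Rightarrow> ('a \<Rightarrow> 'a \<Rightarrow> bool) \<Rightarrow> 'a grp_state \<Rightarrow> bool" where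
  "grp_inv V E (Idle H Ps) = (H \<subseteq> V \<and> is_partition_list (V - H) Ps \<and> (\<forall>P\<in>set Ps. induced_tree E P))"
| "grp_inv V E (Build H Ps Vk S) = (H \<subseteq> V \<and> is_partition_list (V - H) Ps \<and> (\<forall>P\<in>set Ps. induced_tree E P)
     \<and> Vk \<subseteq> H \<and> induced_tree E Vk \<and> distinct S
     \<and> (\<forall>(u, p)\<in>set S. u \<in> H \<and> p \<in> Vk \<and> E p u \<and> (u \<in> Vk \<longrightarrow> (\<exists>w\<in>Vk. E u w \<and> w \<noteq> p))))"

fun grp_key :: "'a grp_state \<Rightarrow> nat \<times> nat \<times> nat \<times> nat" where
  "grp_key (Idle H Ps) = (card H, 1, 0, 0)"
| "grp_key (Build H Ps Vk S) = (card H, 0, card (H - Vk), length S)"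

definition grp_rel :: "('a grp_state \<times> 'a grp_state) set" where
  "grp_rel = inv_image (less_than <*lex*> less_than <*lex*> less_than <*lex*> less_than) grp_key"

lemma wf_grp_rel: "wf grp_rel"
  unfolding grp_rel_def by (intro wf_inv_image wf_lex_prod wf_less_than)

lemma singleton_tree: "simple_graph V E \<Longrightarrow> induced_tree E {v}"
proof -
  have "\<not> induced_cycle E {v} c" for c
  proof
    assume "induced_cycle E {v} c"
    then have "3 \<le> length c" "distinct c" "set c \<subseteq> {v}" unfolding induced_cycle_def by auto
    then have "card (set c) \<le> 1" by (metis card_mono finite.intros is_singletonI is_singleton_altdef)
    then show False using \<open>3 \<le> length c\<close> \<open>distinct c\<close> by (simp add: distinct_card)
  qed
  then show ?thesis unfolding induced_tree_def induced_connected_def by auto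
qed

lemma grp_step_inv:
  assumes sg: "simple_graph V E" and inv: "grp_inv V E s" and st: "grp_step E s t"
  shows "grp_inv V E t \<and> (t, s) \<in> grp_rel"
  using st
proof cases
  case (start v H L Ps)
  then show ?thesis using inv singleton_tree[OF sg] sg unfolding simple_graph_def grp_rel_def
    by auto
next
  case (pop_add H u p Vk L Ps S)
  have fin: "finite V" and sym: "\<And>x y. E x y \<Longrightarrow> E y x"
    using sg unfolding simple_graph_def by auto
  have HV: "H \<subseteq> V" and part: "is_partition_list (V - H) Ps" and trees: "\<forall>P\<in>set Ps. induced_tree E P"
    and VH: "Vk \<subseteq> H" and TV: "induced_tree E Vk" and dS: "distinct ((u, p) # S)"
    and ent: "\<forall>(x, q)\<in>set ((u, p) # S). x \<in> H \<and> q \<in> Vk \<and> E q x \<and> (x \<in> Vk \<longrightarrow> (\<exists>w\<in>Vk. E x w \<and> w \<noteq> q))"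
    using inv pop_add by auto
  have uH: "u \<in> H" and pV: "p \<in> Vk" and Epu: "E p u"
    and uw: "u \<in> Vk \<longrightarrow> (\<exists>w\<in>Vk. E u w \<and> w \<noteq> p)" using ent by auto
  have cond: "\<forall>w\<in>H. E u w \<and> w \<noteq> p \<longrightarrow> w \<notin> Vk" using pop_add by simp
  have uVk: "u \<notin> Vk" using uw cond VH by blast
  have only: "\<forall>w\<in>Vk. E u w \<longrightarrow> w = p" using cond VH by blast
  have T': "induced_tree E (insert u Vk)"
    using tree_insert[OF sg TV pV uVk sym[OF Epu] only] .
  have setL: "set L = {(w, u) | w. w \<in> H \<and> E u w \<and> w \<notin> insert u Vk}" using pop_add by simp
  have dL: "distinct L" using pop_add by simp
  have disj: "set L \<inter> set S = {}"
  proof -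
    have "\<forall>e\<in>set L. snd e = u" using setL by auto
    moreover have "\<forall>e\<in>set S. snd e \<in> Vk" using ent by auto
    ultimately show ?thesis using uVk by fastforce
  qed
  have dLS: "distinct (L @ S)" using dL dS disj by auto
  have entL: "\<forall>(x, q)\<in>set L. x \<in> H \<and> q \<in> insert u Vk \<and> E q x \<and> (x \<in> insert u Vk \<longrightarrow> (\<exists>w\<in>insert u Vk. E x w \<and> w \<noteq> q))"
    using setL by auto
  have entS: "\<forall>(x, q)\<in>set S. x \<in> H \<and> q \<in> insert u Vk \<and> E q x \<and> (x \<in> insert u Vk \<longrightarrow> (\<exists>w\<in>insert u Vk. E x w \<and> w \<noteq> q))"
  proof (intro ballI, clarify)
    fix x q assume xq: "(x, q) \<in> set S"
    have old: "x \<in> H \<and> q \<in> Vk \<and> E q x \<and> (x \<in> Vk \<longrightarrow> (\<exists>w\<in>Vk. E x w \<and> w \<noteq> q))"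
      using ent xq by auto
    have "x \<in> insert u Vk \<longrightarrow> (\<exists>w\<in>insert u Vk. E x w \<and> w \<noteq> q)"
    proof
      assume "x \<in> insert u Vk"
      show "\<exists>w\<in>insert u Vk. E x w \<and> w \<noteq> q"
      proof (cases "x = u")
        case True
        then have "q \<noteq> p" using dS xq by auto
        then show ?thesis using True pV sym[OF Epu] by blast
      next
        case False
        then show ?thesis using old \<open>x \<in> insert u Vk\<close> by blast
      qed
    qed
    then show "x \<in> H \<and> q \<in> insert u Vk \<and> E q x \<and> (x \<in> insert u Vk \<longrightarrow> (\<exists>w\<in>insert u Vk. E x w \<and> w \<noteq> q))"
      using old by blast
  qed
  have finH: "finite H" using HV fin finite_subset by blast
  have "H - insert u Vk = (H - Vk) - {u}" by auto
  moreover have "card ((H - Vk) - {u}) < card (H - Vk)"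
    using finH uH uVk by (intro card_Diff1_less) auto
  ultimately have kc: "card (H - insert u Vk) < card (H - Vk)" by simp
  have I: "grp_inv V E t"
    using pop_add HV part trees VH uH T' dLS entL entS by auto
  show ?thesis using I kc pop_add unfolding grp_rel_def by simp
next
  case (pop_skip u H p Vk Ps S)
  then show ?thesis using inv unfolding grp_rel_def by auto
next
  case (finish H Ps Vk)
  have fin: "finite V" using sg unfolding simple_graph_def by auto
  have HV: "H \<subseteq> V" and part: "is_partition_list (V - H) Ps" and trees: "\<forall>P\<in>set Ps. induced_tree E P"
    and VH: "Vk \<subseteq> H" and TV: "induced_tree E Vk"
    using inv finish by auto
  have ne: "Vk \<noteq> {}" using TV unfolding induced_tree_def by auto
  have eq: "V - (H - Vk) = (V - H) \<union> Vk" using HV VH by auto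
  have P': "is_partition_list (V - (H - Vk)) (Ps @ [Vk])"
    unfolding eq using part ne VH by (intro part_app) auto
  have finH: "finite H" using HV fin finite_subset by blast
  have kc: "card (H - Vk) < card H"
    proof -
    have fV: "finite Vk" using finH VH finite_subset by blast
    then have "card Vk > 0" using ne by (simp add: card_gt_0_iff)
    moreover have "card Vk \<le> card H" using finH VH by (rule card_mono)
    moreover have "card (H - Vk) = card H - card Vk" using fV VH by (rule card_Diff_subset)
    ultimately show ?thesis by simp
  qed
  show ?thesis using finish HV P' trees TV kc unfolding grp_rel_def by auto
qed

lemma reach_inv:
  assumes sg: "simple_graph V E" and r: "(grp_step E)\<^sup>*\<^sup>* (Idle V []) s"
  shows "grp_inv V E s"
  using r
proof induction
  case base
  have "is_partition_list {} []" unfolding is_partition_list_def by simp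
  then show ?case by simp
next
  case (step y z)
  then show ?case using grp_step_inv[OF sg] by blast
qed

lemma progress:
  assumes sg: "simple_graph V E"
  shows "(\<exists>t. grp_step E s t) \<or> (\<exists>Ps. s = Idle {} Ps)"
proof (cases s)
  case (Idle H Ps)
  show ?thesis
  proof (cases "H = {}")
    case True then show ?thesis using Idle by simp
  next
    case False
    then obtain v where v: "v \<in> H" by blast
    define X where "X = {(w, v) | w. w \<in> H \<and> E v w}"
    have "X \<subseteq> V \<times> {v}" using sg unfolding simple_graph_def X_def by auto
    moreover have "finite (V \<times> {v})" using sg unfolding simple_graph_def by auto
    ultimately have "finite X" by (rule finite_subset)
    from finite_distinct_list[OF this] obtain L where L1: "set L = X" and L2: "distinct L" by blast
    have "grp_step E (Idle H Ps) (Build H Ps {v} L)"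
      by (rule grp_step.start[where v=v and H=H and L=L and E=E and Ps=Ps, OF v L2 L1[unfolded X_def]])
    then show ?thesis unfolding Idle by blast
  qed
next
  case (Build H Ps Vk S)
  show ?thesis
  proof (cases S)
    case Nil
    have "grp_step E (Build H Ps Vk []) (Idle (H - Vk) (Ps @ [Vk]))" by (rule grp_step.finish)
    then show ?thesis unfolding Build Nil by blast
  next
    case (Cons e S')
    obtain u p where e: "e = (u, p)" by fastforce
    show ?thesis
    proof (cases "\<forall>w\<in>H. E u w \<and> w \<noteq> p \<longrightarrow> w \<notin> Vk")
      case True
      define X where "X = {(w, u) | w. w \<in> H \<and> E u w \<and> w \<notin> insert u Vk}"
      have "X \<subseteq> V \<times> {u}" using sg unfolding simple_graph_def X_def by auto
      moreover have "finite (V \<times> {u})" using sg unfolding simple_graph_def by auto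
      ultimately have "finite X" by (rule finite_subset)
      from finite_distinct_list[OF this] obtain L where L1: "set L = X" and L2: "distinct L" by blast
      have "grp_step E (Build H Ps Vk ((u, p) # S')) (Build H Ps (insert u Vk) (L @ S'))"
        by (rule grp_step.pop_add[where H=H and u=u and p=p and Vk=Vk and L=L and E=E and Ps=Ps and S=S', OF True L2 L1[unfolded X_def]])
      then show ?thesis unfolding Build Cons e by blast
    next
      case False
      have "grp_step E (Build H Ps Vk ((u, p) # S')) (Build H Ps Vk S')"
        by (rule grp_step.pop_skip[where H=H and u=u and p=p and Vk=Vk and E=E and Ps=Ps and S=S', OF False])
      then show ?thesis unfolding Build Cons e by blast
    qed
  qed
qed

theorem theorem1:
  fixes V :: "'a set" and E :: "'a \<Rightarrow> 'a \<Rightarrow> bool"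
  assumes "simple_graph V E"
    and "V \<noteq> {}"
    and "induced_connected E V"
  shows "(\<nexists>f. f 0 = Idle V [] \<and> (\<forall>i. grp_step E (f i) (f (Suc i))))
    \<and> (\<forall>s. (grp_step E)\<^sup>*\<^sup>* (Idle V []) s \<longrightarrow> (\<exists>t. grp_step E s t) \<or> (\<exists>Ps. s = Idle {} Ps))
    \<and> (\<forall>Ps. (grp_step E)\<^sup>*\<^sup>* (Idle V []) (Idle {} Ps) \<longrightarrow>
          is_partition_list V Ps \<and> (\<forall>P\<in>set Ps. induced_tree E P))"
proof (intro conjI allI impI)
  show "\<nexists>f. f 0 = Idle V [] \<and> (\<forall>i. grp_step E (f i) (f (Suc i)))"
  proof
    assume "\<exists>f. f 0 = Idle V [] \<and> (\<forall>i. grp_step E (f i) (f (Suc i)))"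
    then obtain f where f0: "f 0 = Idle V []" and fs: "\<forall>i. grp_step E (f i) (f (Suc i))" by blast
    have I: "grp_inv V E (f i)" for i
    proof (induction i)
      case 0
      have "is_partition_list {} []" unfolding is_partition_list_def by simp
      then show ?case using f0 by simp
    next
      case (Suc i) show ?case by (rule conjunct1[OF grp_step_inv[OF assms(1) Suc fs[rule_format, of i]]])
    qed
    have "\<forall>i. (f (Suc i), f i) \<in> grp_rel" using conjunct2[OF grp_step_inv[OF assms(1) I fs[rule_format]]] by blast
    then show False using wf_grp_rel unfolding wf_iff_no_infinite_down_chain by blast
  qed
next
  fix s show "(\<exists>t. grp_step E s t) \<or> (\<exists>Ps. s = Idle {} Ps)" using progress[OF assms(1)] .
next
  fix Ps assume r: "(grp_step E)\<^sup>*\<^sup>* (Idle V []) (Idle {} Ps)"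
  have "grp_inv V E (Idle {} Ps)" using reach_inv[OF assms(1) r] .
  then show "is_partition_list V Ps" by simp
  show "\<forall>P\<in>set Ps. induced_tree E P" using reach_inv[OF assms(1) r] by simp
qed

end
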